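(* Let $(G,E)$ be a finitely generated and contracting self-similar groupoid action on a finite directed graph $E$, and let $q:E^{-\infty}\to\mathcal{J}_{G,E}$ be the quotient map. Then for $\mu,\nu\in E^{-\infty}$, $q(\mu)$ and $q(\nu)$ lie in the same connected component of $\mathcal{J}_{G,E}$ if and only if $\mu\sim_e\nu$. That is, the connected component space $\mathcal{C}(\mathcal{J}_{G,E})$ equals $E^{-\infty}/\sim_e$.
   Context: Directed graph $E=(E^0,E^1,r,s)$; finite paths $\mu_1\cdots\mu_n$ with $s(\mu_i)=r(\mu_{i+1})$; $E^*$ finite paths, $vE^*$ those with range $v$; $E^{-\infty}$ left-infinite paths $\cdots\mu_{-2}\mu_{-1}$ with product topology. A self-similar groupoid action $(G,E)$: $G$ is a groupoid with unit space $E^0$, domain $d$, codomain $c$, acting faithfully so that each $g$ is a length-preserving bijection $d(g)E^*\to c(g)E^*$ with restrictions $g|_\mu\in G$, $d(g|_\mu)=s(\mu)$, satisfying $g\cdot(\mu\nu)=(g\cdot\mu)(g|_\mu\cdot\nu)$. Finitely generated: $G$ is generated as a groupoid by a finite set. Contracting: there is a finite $F\subseteq G$ such that for every $g$ there is $n$ with $g|_\mu\in F$ for all $\mu\in d(g)E^k$, $k\ge n$. Asymptotic equivalence: $\mu\sim_{ae}\nu$ iff there are a finite $F\subseteq G$ and $(g_n)_{n<0}\subseteq F$ with $d(g_n)=r(\mu_n)$ and $g_n\cdot\mu_n\cdots\mu_{-1}=\nu_n\cdots\nu_{-1}$ for all $n<0$; the limit space is $\mathcal{J}_{G,E}=E^{-\infty}/\sim_{ae}$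 with the quotient topology. The relation $\sim_e$: $\mu\sim_e\nu$ iff there is a sequence $(g_n)_{n<0}\subseteq G$ (not required to lie in a finite set) with $d(g_n)=r(\mu_n)$ and $g_n\cdot\mu_n\cdots\mu_{-1}=\nu_n\cdots\nu_{-1}$ for all $n<0$. The connected component space $\mathcal{C}(X)$ of a space $X$ is its quotient by the relation of lying in the same connected component. *)

theory Defs
  imports "HOL-Analysis.Analysis"
begin

definition graph :: "'v set \<Rightarrow> 'e set \<Rightarrow> ('e \<Rightarrow> 'v) \<Rightarrow> ('e \<Rightarrow> 'v) \<Rightarrow> bool" where
  "graph V Ed rg sr \<longleftrightarrow> (\<forall>e\<in>Ed. rg e \<in> V \<and> sr e \<in> V)"

definition is_path :: "'e set \<Rightarrow> ('e \<Rightarrow> 'v) \<Rightarrow> ('e \<Rightarrow> 'v) \<Rightarrow> 'e list \<Rightarrow> bool" where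
  "is_path Ed rg sr p \<longleftrightarrow> set p \<subseteq> Ed \<and> (\<forall>i. Suc i < length p \<longrightarrow> sr (p ! i) = rg (p ! Suc i))"

text \<open>vE^*: finite paths with range v.  The path of length 0 at v is represented by the
  empty list (the vertex it sits at is the parameter v).\<close>

definition paths_at :: "'e set \<Rightarrow> ('e \<Rightarrow> 'v) \<Rightarrow> ('e \<Rightarrow> 'v) \<Rightarrow> 'v \<Rightarrow> 'e list set" where
  "paths_at Ed rg sr v = {p. is_path Ed rg sr p \<and> (p \<noteq> [] \<longrightarrow> rg (hd p) = v)}"

definition path_source :: "('e \<Rightarrow> 'v) \<Rightarrow> 'v \<Rightarrow> 'e list \<Rightarrow> 'v" where
  "path_source sr v p = (if p = [] then v else sr (last p))"

definition groupoid ::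
  "'v set \<Rightarrow> 'g set \<Rightarrow> ('g \<Rightarrow> 'v) \<Rightarrow> ('g \<Rightarrow> 'v) \<Rightarrow> ('g \<Rightarrow> 'g \<Rightarrow> 'g) \<Rightarrow> ('g \<Rightarrow> 'g) \<Rightarrow> ('v \<Rightarrow> 'g) \<Rightarrow> bool" where
  "groupoid V Gr dm cd mul ginv unit \<longleftrightarrow>
     (\<forall>g\<in>Gr. dm g \<in> V \<and> cd g \<in> V) \<and>
     (\<forall>v\<in>V. unit v \<in> Gr \<and> dm (unit v) = v \<and> cd (unit v) = v) \<and>
     inj_on unit V \<and>
     (\<forall>g\<in>Gr. \<forall>h\<in>Gr. dm g = cd h \<longrightarrow> mul g h \<in> Gr \<and> dm (mul g h) = dm h \<and> cd (mul g h) = cd g) \<and>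
     (\<forall>g\<in>Gr. \<forall>h\<in>Gr. \<forall>k\<in>Gr. dm g = cd h \<longrightarrow> dm h = cd k \<longrightarrow> mul (mul g h) k = mul g (mul h k)) \<and>
     (\<forall>g\<in>Gr. mul (unit (cd g)) g = g \<and> mul g (unit (dm g)) = g) \<and>
     (\<forall>g\<in>Gr. ginv g \<in> Gr \<and> dm (ginv g) = cd g \<and> cd (ginv g) = dm g \<and>
              mul (ginv g) g = unit (dm g) \<and> mul g (ginv g) = unit (cd g))"

inductive_set gen_groupoid ::
  "'v set \<Rightarrow> ('g \<Rightarrow> 'v) \<Rightarrow> ('g \<Rightarrow> 'v) \<Rightarrow> ('g \<Rightarrow> 'g \<Rightarrow> 'g) \<Rightarrow> ('g \<Rightarrow> 'g) \<Rightarrow> ('v \<Rightarrow> 'g) \<Rightarrow> 'g set \<Rightarrow> 'g set"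
  for V dm cd mul ginv unit S where
  gen_unit: "v \<in> V \<Longrightarrow> unit v \<in> gen_groupoid V dm cd mul ginv unit S"
| gen_base: "g \<in> S \<Longrightarrow> g \<in> gen_groupoid V dm cd mul ginv unit S"
| gen_inv: "g \<in> gen_groupoid V dm cd mul ginv unit S \<Longrightarrow> ginv g \<in> gen_groupoid V dm cd mul ginv unit S"
| gen_mul: "g \<in> gen_groupoid V dm cd mul ginv unit S \<Longrightarrow> h \<in> gen_groupoid V dm cd mul ginv unit S \<Longrightarrow>
            dm g = cd h \<Longrightarrow> mul g h \<in> gen_groupoid V dm cd mul ginv unit S"

text \<open>act g is the action of g on d(g)E^*, res g p is the restriction g|_p.\<close>

definition self_similar_action ::
  "'v set \<Rightarrow> 'e set \<Rightarrow> ('e \<Rightarrow> 'v) \<Rightarrow> ('e \<Rightarrow> 'v) \<Rightarrow>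
   'g set \<Rightarrow> ('g \<Rightarrow> 'v) \<Rightarrow> ('g \<Rightarrow> 'v) \<Rightarrow> ('g \<Rightarrow> 'g \<Rightarrow> 'g) \<Rightarrow> ('g \<Rightarrow> 'g) \<Rightarrow> ('v \<Rightarrow> 'g) \<Rightarrow>
   ('g \<Rightarrow> 'e list \<Rightarrow> 'e list) \<Rightarrow> ('g \<Rightarrow> 'e list \<Rightarrow> 'g) \<Rightarrow> bool" where
  "self_similar_action V Ed rg sr Gr dm cd mul ginv unit act res \<longleftrightarrow>
     graph V Ed rg sr \<and>
     groupoid V Gr dm cd mul ginv unit \<and>
     \<comment> \<open>each g is a length-preserving bijection d(g)E^* \<rightarrow> c(g)E^*\<close>
     (\<forall>g\<in>Gr. bij_betw (act g) (paths_at Ed rg sr (dm g)) (paths_at Ed rg sr (cd g)) \<and>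
              (\<forall>p\<in>paths_at Ed rg sr (dm g). length (act g p) = length p)) \<and>
     \<comment> \<open>groupoid action\<close>
     (\<forall>v\<in>V. \<forall>p\<in>paths_at Ed rg sr v. act (unit v) p = p) \<and>
     (\<forall>g\<in>Gr. \<forall>h\<in>Gr. dm g = cd h \<longrightarrow>
        (\<forall>p\<in>paths_at Ed rg sr (dm h). act (mul g h) p = act g (act h p))) \<and>
     \<comment> \<open>faithfulness\<close>
     (\<forall>g\<in>Gr. \<forall>h\<in>Gr. dm g = dm h \<longrightarrow> cd g = cd h \<longrightarrow>
        (\<forall>p\<in>paths_at Ed rg sr (dm g). act g p = act h p) \<longrightarrow> g = h) \<and>
     \<comment> \<open>restrictions and self-similarity\<close>
     (\<forall>g\<in>Gr. \<forall>p\<in>paths_at Ed rg sr (dm g).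
        res g p \<in> Gr \<and> dm (res g p) = path_source sr (dm g) p \<and>
        (\<forall>q. p @ q \<in> paths_at Ed rg sr (dm g) \<longrightarrow> act g (p @ q) = act g p @ act (res g p) q))"

definition finitely_generated ::
  "'v set \<Rightarrow> 'g set \<Rightarrow> ('g \<Rightarrow> 'v) \<Rightarrow> ('g \<Rightarrow> 'v) \<Rightarrow> ('g \<Rightarrow> 'g \<Rightarrow> 'g) \<Rightarrow> ('g \<Rightarrow> 'g) \<Rightarrow> ('v \<Rightarrow> 'g) \<Rightarrow> bool" where
  "finitely_generated V Gr dm cd mul ginv unit \<longleftrightarrow>
     (\<exists>S. finite S \<and> S \<subseteq> Gr \<and> Gr = gen_groupoid V dm cd mul ginv unit S)"

definition contracting ::
  "'e set \<Rightarrow> ('e \<Rightarrow> 'v) \<Rightarrow> ('e \<Rightarrow> 'v) \<Rightarrow> 'g set \<Rightarrow> ('g \<Rightarrow> 'v) \<Rightarrow> ('g \<Rightarrow> 'e list \<Rightarrow> 'g) \<Rightarrow> bool" where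
  "contracting Ed rg sr Gr dm res \<longleftrightarrow>
     (\<exists>F. finite F \<and> F \<subseteq> Gr \<and>
        (\<forall>g\<in>Gr. \<exists>n. \<forall>p\<in>paths_at Ed rg sr (dm g). length p \<ge> n \<longrightarrow> res g p \<in> F))"

text \<open>A left-infinite path ... mu_(-2) mu_(-1) is encoded as x :: nat \<Rightarrow> 'e with
  x k = mu_(-(k+1)).  The path condition s(mu_(n-1)) = r(mu_n) becomes sr (x (Suc k)) = rg (x k).\<close>

definition left_inf_paths :: "'e set \<Rightarrow> ('e \<Rightarrow> 'v) \<Rightarrow> ('e \<Rightarrow> 'v) \<Rightarrow> (nat \<Rightarrow> 'e) set" where
  "left_inf_paths Ed rg sr = {x. (\<forall>k. x k \<in> Ed) \<and> (\<forall>k. sr (x (Suc k)) = rg (x k))}"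

definition left_inf_topology :: "'e set \<Rightarrow> ('e \<Rightarrow> 'v) \<Rightarrow> ('e \<Rightarrow> 'v) \<Rightarrow> (nat \<Rightarrow> 'e) topology" where
  "left_inf_topology Ed rg sr =
     subtopology (product_topology (\<lambda>_. discrete_topology Ed) UNIV) (left_inf_paths Ed rg sr)"

text \<open>The finite tail mu_n ... mu_(-1) with n = -(k+1), i.e. [x k, x (k-1), ..., x 0].\<close>
definition tail :: "(nat \<Rightarrow> 'e) \<Rightarrow> nat \<Rightarrow> 'e list" where
  "tail x k = rev (map x [0..<Suc k])"

definition ae_equiv ::
  "('e \<Rightarrow> 'v) \<Rightarrow> 'g set \<Rightarrow> ('g \<Rightarrow> 'v) \<Rightarrow> ('g \<Rightarrow> 'e list \<Rightarrow> 'e list) \<Rightarrow> (nat \<Rightarrow> 'e) \<Rightarrow> (nat \<Rightarrow> 'e) \<Rightarrow> bool" where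
  "ae_equiv rg Gr dm act x y \<longleftrightarrow>
     (\<exists>F g. finite F \<and> F \<subseteq> Gr \<and>
        (\<forall>k. g k \<in> F \<and> dm (g k) = rg (x k) \<and> act (g k) (tail x k) = tail y k))"

definition e_equiv ::
  "('e \<Rightarrow> 'v) \<Rightarrow> 'g set \<Rightarrow> ('g \<Rightarrow> 'v) \<Rightarrow> ('g \<Rightarrow> 'e list \<Rightarrow> 'e list) \<Rightarrow> (nat \<Rightarrow> 'e) \<Rightarrow> (nat \<Rightarrow> 'e) \<Rightarrow> bool" where
  "e_equiv rg Gr dm act x y \<longleftrightarrow>
     (\<exists>g. \<forall>k. g k \<in> Gr \<and> dm (g k) = rg (x k) \<and> act (g k) (tail x k) = tail y k)"

end

theory Submission
  imports Defs
begin

lemma is_path_Nil[simp]: "is_path Ed rg sr []"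
  by (simp add: is_path_def)

lemma is_path_Cons: "is_path Ed rg sr (e # p) \<longleftrightarrow> e \<in> Ed \<and> is_path Ed rg sr p \<and> (p \<noteq> [] \<longrightarrow> sr e = rg (hd p))"
proof
  assume h: "is_path Ed rg sr (e # p)"
  have "sr e = rg (hd p)" if "p \<noteq> []"
    using h that unfolding is_path_def by (cases p) auto
  moreover have "is_path Ed rg sr p"
    unfolding is_path_def
  proof (intro conjI allI impI)
    show "set p \<subseteq> Ed" using h by (simp add: is_path_def)
    fix i assume "Suc i < length p"
    then show "sr (p ! i) = rg (p ! Suc i)"
      using h unfolding is_path_def by (metis Suc_less_eq length_Cons nth_Cons_Suc)
  qed
  ultimately show "e \<in> Ed \<and> is_path Ed rg sr p \<and> (p \<noteq> [] \<longrightarrow> sr e = rg (hd p))"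
    using h by (simp add: is_path_def)
next
  assume h: "e \<in> Ed \<and> is_path Ed rg sr p \<and> (p \<noteq> [] \<longrightarrow> sr e = rg (hd p))"
  show "is_path Ed rg sr (e # p)"
    unfolding is_path_def
  proof (intro conjI allI impI)
    show "set (e # p) \<subseteq> Ed" using h by (simp add: is_path_def)
    fix i assume i: "Suc i < length (e # p)"
    show "sr ((e # p) ! i) = rg ((e # p) ! Suc i)"
    proof (cases i)
      case 0 then show ?thesis using h i by (cases p) auto
    next
      case (Suc j) then show ?thesis using h i unfolding is_path_def by auto
    qed
  qed
qed

lemma is_path_append: "is_path Ed rg sr (p @ q) \<longleftrightarrow>
   is_path Ed rg sr p \<and> is_path Ed rg sr q \<and> (p \<noteq> [] \<and> q \<noteq> [] \<longrightarrow> sr (last p) = rg (hd q))"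
  by (induction p) (auto simp: is_path_Cons)



lemma paths_at_prefix: "p @ q \<in> paths_at Ed rg sr v \<Longrightarrow> p \<in> paths_at Ed rg sr v"
  using is_path_append[of Ed rg sr p q] by (cases p) (auto simp: paths_at_def)

lemma paths_at_suffix: "p @ q \<in> paths_at Ed rg sr v \<Longrightarrow> q \<in> paths_at Ed rg sr (path_source sr v p)"
  using is_path_append[of Ed rg sr p q] by (cases "p = []"; cases q) (auto simp: paths_at_def path_source_def)

lemma paths_at_Ed: "p \<in> paths_at Ed rg sr v \<Longrightarrow> set p \<subseteq> Ed"
  by (simp add: paths_at_def is_path_def)

lemma paths_at_hd: "p \<in> paths_at Ed rg sr v \<Longrightarrow> p \<noteq> [] \<Longrightarrow> rg (hd p) = v"
  by (simp add: paths_at_def)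

locale SSA =
  fixes V :: "'v set" and Ed :: "'e set" and rg sr :: "'e \<Rightarrow> 'v"
    and Gr :: "'g set" and dm cd :: "'g \<Rightarrow> 'v" and mul :: "'g \<Rightarrow> 'g \<Rightarrow> 'g"
    and ginv :: "'g \<Rightarrow> 'g" and unit :: "'v \<Rightarrow> 'g"
    and act :: "'g \<Rightarrow> 'e list \<Rightarrow> 'e list" and res :: "'g \<Rightarrow> 'e list \<Rightarrow> 'g"
  assumes ssa: "self_similar_action V Ed rg sr Gr dm cd mul ginv unit act res"
begin

abbreviation PA where "PA v \<equiv> paths_at Ed rg sr v"

lemma grp: "groupoid V Gr dm cd mul ginv unit"
  using ssa unfolding self_similar_action_def by (elim conjE)

lemma ssa_bij: "\<forall>g\<in>Gr. bij_betw (act g) (PA (dm g)) (PA (cd g)) \<and> (\<forall>p\<in>PA (dm g). length (act g p) = length p)"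
  using ssa unfolding self_similar_action_def by (elim conjE)

lemma ssa_unit: "\<forall>v\<in>V. \<forall>p\<in>PA v. act (unit v) p = p"
  using ssa unfolding self_similar_action_def by (elim conjE)

lemma ssa_mul: "\<forall>g\<in>Gr. \<forall>h\<in>Gr. dm g = cd h \<longrightarrow> (\<forall>p\<in>PA (dm h). act (mul g h) p = act g (act h p))"
  using ssa unfolding self_similar_action_def by (elim conjE)

lemma ssa_res: "\<forall>g\<in>Gr. \<forall>p\<in>PA (dm g).
        res g p \<in> Gr \<and> dm (res g p) = path_source sr (dm g) p \<and>
        (\<forall>q. p @ q \<in> PA (dm g) \<longrightarrow> act g (p @ q) = act g p @ act (res g p) q)"
  using ssa unfolding self_similar_action_def by (elim conjE)

lemma grp_dmcd: "\<forall>g\<in>Gr. dm g \<in> V \<and> cd g \<in> V"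
  using grp unfolding groupoid_def by (elim conjE)
lemma grp_mul: "\<forall>g\<in>Gr. \<forall>h\<in>Gr. dm g = cd h \<longrightarrow> mul g h \<in> Gr \<and> dm (mul g h) = dm h \<and> cd (mul g h) = cd g"
  using grp unfolding groupoid_def by (elim conjE)
lemma grp_inv: "\<forall>g\<in>Gr. ginv g \<in> Gr \<and> dm (ginv g) = cd g \<and> cd (ginv g) = dm g \<and>
              mul (ginv g) g = unit (dm g) \<and> mul g (ginv g) = unit (cd g)"
  using grp unfolding groupoid_def by (elim conjE)
lemma grp_unit: "\<forall>v\<in>V. unit v \<in> Gr \<and> dm (unit v) = v \<and> cd (unit v) = v"
  using grp unfolding groupoid_def by (elim conjE)

lemma dm_V: "g \<in> Gr \<Longrightarrow> dm g \<in> V" and cd_V: "g \<in> Gr \<Longrightarrow> cd g \<in> V"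
  using grp_dmcd by auto

lemma act_bij: "g \<in> Gr \<Longrightarrow> bij_betw (act g) (PA (dm g)) (PA (cd g))"
  using ssa_bij by simp

lemma act_in: "g \<in> Gr \<Longrightarrow> p \<in> PA (dm g) \<Longrightarrow> act g p \<in> PA (cd g)"
  by (meson act_bij bij_betwE)

lemma act_len: "g \<in> Gr \<Longrightarrow> p \<in> PA (dm g) \<Longrightarrow> length (act g p) = length p"
  using ssa_bij by simp

lemma act_unit: "v \<in> V \<Longrightarrow> p \<in> PA v \<Longrightarrow> act (unit v) p = p"
  using ssa_unit by simp

lemma mul_facts: "g \<in> Gr \<Longrightarrow> h \<in> Gr \<Longrightarrow> dm g = cd h \<Longrightarrow> mul g h \<in> Gr \<and> dm (mul g h) = dm h \<and> cd (mul g h) = cd g"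
  using grp_mul by simp

lemma act_mul: "g \<in> Gr \<Longrightarrow> h \<in> Gr \<Longrightarrow> dm g = cd h \<Longrightarrow> p \<in> PA (dm h) \<Longrightarrow> act (mul g h) p = act g (act h p)"
  using ssa_mul by simp

lemma inv_facts: "g \<in> Gr \<Longrightarrow> ginv g \<in> Gr \<and> dm (ginv g) = cd g \<and> cd (ginv g) = dm g \<and> mul (ginv g) g = unit (dm g)"
  using grp_inv by simp

lemma unit_facts: "v \<in> V \<Longrightarrow> unit v \<in> Gr \<and> dm (unit v) = v \<and> cd (unit v) = v"
  using grp_unit by simp

lemma act_inv: "g \<in> Gr \<Longrightarrow> p \<in> PA (dm g) \<Longrightarrow> act (ginv g) (act g p) = p"
proof -
  assume g: "g \<in> Gr" and p: "p \<in> PA (dm g)"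
  have "act (ginv g) (act g p) = act (mul (ginv g) g) p"
    using inv_facts[OF g] act_mul g p by metis
  also have "\<dots> = p" using inv_facts[OF g] act_unit dm_V[OF g] p by simp
  finally show ?thesis .
qed

lemma res_facts: "g \<in> Gr \<Longrightarrow> p \<in> PA (dm g) \<Longrightarrow> res g p \<in> Gr \<and> dm (res g p) = path_source sr (dm g) p"
  using ssa_res by simp

lemma act_app: "g \<in> Gr \<Longrightarrow> p @ q \<in> PA (dm g) \<Longrightarrow> act g (p @ q) = act g p @ act (res g p) q"
proof -
  assume g: "g \<in> Gr" and pq: "p @ q \<in> PA (dm g)"
  show ?thesis using ssa_res g pq paths_at_prefix[OF pq] by simp
qed

lemma act_app_split:
  assumes g: "g \<in> Gr" and pq: "p @ q \<in> PA (dm g)" and eq: "act g (p @ q) = p' @ q'"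
    and l: "length p' = length p"
  shows "act (res g p) q = q'" "act g p = p'" "res g p \<in> Gr" "dm (res g p) = path_source sr (dm g) p"
proof -
  have pP: "p \<in> PA (dm g)" using paths_at_prefix[OF pq] .
  have "act g p @ act (res g p) q = p' @ q'" using act_app[OF g pq] eq by simp
  moreover have "length (act g p) = length p'" using act_len[OF g pP] l by simp
  ultimately show "act (res g p) q = q'" "act g p = p'" by auto
  show "res g p \<in> Gr" "dm (res g p) = path_source sr (dm g) p" using res_facts[OF g pP] by auto
qed

lemma cd_hd: "g \<in> Gr \<Longrightarrow> p \<in> PA (dm g) \<Longrightarrow> p \<noteq> [] \<Longrightarrow> rg (hd (act g p)) = cd g"
proof -
  assume g: "g \<in> Gr" and p: "p \<in> PA (dm g)" and ne: "p \<noteq> []"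
  have "act g p \<noteq> []" using act_len[OF g p] ne by auto
  then show ?thesis using act_in[OF g p] paths_at_hd by metis
qed

end


lemma tail_Suc: "tail x (Suc k) = x (Suc k) # tail x k"
  by (simp add: tail_def)

lemma tail_0: "tail x 0 = [x 0]"
  by (simp add: tail_def)

lemma length_tail[simp]: "length (tail x k) = Suc k"
  by (simp add: tail_def)

lemma tail_ne[simp]: "tail x k \<noteq> []"
  by (simp add: tail_def)

lemma hd_tail[simp]: "hd (tail x k) = x k"
  by (cases k) (simp_all add: tail_Suc tail_0)

lemma tail_drop: "k \<le> m \<Longrightarrow> drop (m - k) (tail x m) = tail x k"
proof -
  assume "k \<le> m"
  then obtain j where m: "m = k + j" using le_Suc_ex by blast
  have "drop j (tail x (k + j)) = tail x k"
    by (induction j) (simp_all add: tail_Suc)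
  then show ?thesis using m by simp
qed

lemma tail_split: "k \<le> m \<Longrightarrow> tail x m = take (m - k) (tail x m) @ tail x k"
  by (metis append_take_drop_id tail_drop)

lemma tail_eq_iff: "tail x k = tail y k \<longleftrightarrow> (\<forall>i\<le>k. x i = y i)"
proof -
  have "tail x k = tail y k \<longleftrightarrow> map x [0..<Suc k] = map y [0..<Suc k]"
    by (simp only: tail_def rev_is_rev_conv)
  also have "\<dots> \<longleftrightarrow> (\<forall>i\<le>k. x i = y i)"
    by (simp only: map_eq_conv set_upt) (auto simp: less_Suc_eq_le)
  finally show ?thesis .
qed

lemma tail_eq_le: "tail x m = tail y m \<Longrightarrow> k \<le> m \<Longrightarrow> tail x k = tail y k"
  by (simp add: tail_eq_iff)

lemma tail_path: "x \<in> left_inf_paths Ed rg sr \<Longrightarrow> tail x k \<in> paths_at Ed rg sr (rg (x k))"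
proof (induction k)
  case 0 then show ?case by (simp add: tail_0 paths_at_def is_path_Cons left_inf_paths_def)
next
  case (Suc k)
  then show ?case
    by (simp add: tail_Suc paths_at_def is_path_Cons left_inf_paths_def)
qed

lemma LIP_intro: "(\<And>k. is_path Ed rg sr (tail x k)) \<Longrightarrow> x \<in> left_inf_paths Ed rg sr"
  unfolding left_inf_paths_def
proof (intro CollectI conjI allI)
  assume h: "\<And>k. is_path Ed rg sr (tail x k)"
  fix k
  show "x k \<in> Ed" using h[of k] by (cases k) (simp_all add: tail_Suc tail_0 is_path_Cons)
  show "sr (x (Suc k)) = rg (x k)" using h[of "Suc k"] by (simp add: tail_Suc is_path_Cons)
qed

abbreviation LIP where "LIP Ed rg sr \<equiv> left_inf_paths Ed rg sr"
abbreviation PT where "PT Ed \<equiv> product_topology (\<lambda>_::nat. discrete_topology Ed) UNIV"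

lemma PiE_Ed: "x \<in> (\<Pi>\<^sub>E i\<in>(UNIV::nat set). Ed) \<longleftrightarrow> (\<forall>i. x i \<in> Ed)"
  by (simp add: PiE_iff)

lemma LIP_sub: "LIP Ed rg sr \<subseteq> (\<Pi>\<^sub>E i\<in>(UNIV::nat set). Ed)"
  by (auto simp: PiE_Ed left_inf_paths_def)

lemma topspace_LIT: "topspace (left_inf_topology Ed rg sr) = LIP Ed rg sr"
  using LIP_sub[of Ed rg sr] unfolding left_inf_topology_def by (simp add: Int_absorb1 Int_absorb2)

lemma openin_PT_crit:
  assumes S: "S \<subseteq> (\<Pi>\<^sub>E i\<in>(UNIV::nat set). Ed)"
    and c: "\<And>x. x \<in> S \<Longrightarrow> \<exists>k. \<forall>y. (\<forall>i. y i \<in> Ed) \<longrightarrow> (\<forall>i\<le>k. y i = x i) \<longrightarrow> y \<in> S"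
  shows "openin (PT Ed) S"
  unfolding openin_product_topology_alt
proof
  fix x assume x: "x \<in> S"
  obtain k where k: "\<forall>y. (\<forall>i. y i \<in> Ed) \<longrightarrow> (\<forall>i\<le>k. y i = x i) \<longrightarrow> y \<in> S" using c[OF x] by blast
  have xE: "\<forall>i. x i \<in> Ed" using S x by (auto simp: PiE_Ed)
  define U where "U = (\<lambda>i. if i \<le> k then {x i} else Ed)"
  show "\<exists>U. finite {i \<in> UNIV. U i \<noteq> topspace (discrete_topology Ed)} \<and>
             (\<forall>i\<in>UNIV. openin (discrete_topology Ed) (U i)) \<and> x \<in> Pi\<^sub>E UNIV U \<and> Pi\<^sub>E UNIV U \<subseteq> S"
  proof (intro exI conjI)
    show "finite {i \<in> UNIV. U i \<noteq> topspace (discrete_topology Ed)}"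
      by (rule finite_subset[of _ "{..k}"]) (auto simp: U_def)
    show "\<forall>i\<in>UNIV. openin (discrete_topology Ed) (U i)" using xE by (auto simp: U_def)
    have "x i \<in> U i" for i using xE by (auto simp: U_def)
    then show "x \<in> Pi\<^sub>E UNIV U" by (auto simp: PiE_iff)
    show "Pi\<^sub>E UNIV U \<subseteq> S"
    proof
      fix y assume "y \<in> Pi\<^sub>E UNIV U"
      then have "\<forall>i. y i \<in> U i" by (simp add: PiE_iff)
      then have "(\<forall>i. y i \<in> Ed) \<and> (\<forall>i\<le>k. y i = x i)"
        using xE by (metis U_def singletonD)
      then show "y \<in> S" using k by blast
    qed
  qed
qed

lemma openin_LIT_crit:
  assumes S: "S \<subseteq> LIP Ed rg sr"
    and c: "\<And>x. x \<in> S \<Longrightarrow> \<exists>k. \<forall>y\<in>LIP Ed rg sr. tail y k = tail x k \<longrightarrow> y \<in> S"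
  shows "openin (left_inf_topology Ed rg sr) S"
proof -
  define T where "T = {y \<in> (\<Pi>\<^sub>E i\<in>(UNIV::nat set). Ed). \<exists>x\<in>S. \<exists>k. (\<forall>z\<in>LIP Ed rg sr. tail z k = tail x k \<longrightarrow> z \<in> S) \<and> (\<forall>i\<le>k. y i = x i)}"
  have "openin (PT Ed) T"
  proof (rule openin_PT_crit)
    show "T \<subseteq> (\<Pi>\<^sub>E i\<in>(UNIV::nat set). Ed)" by (auto simp: T_def)
    fix y assume "y \<in> T"
    then obtain x k where x: "x \<in> S" and k: "\<forall>z\<in>LIP Ed rg sr. tail z k = tail x k \<longrightarrow> z \<in> S"
      and yx: "\<forall>i\<le>k. y i = x i" by (auto simp: T_def)
    show "\<exists>k. \<forall>z. (\<forall>i. z i \<in> Ed) \<longrightarrow> (\<forall>i\<le>k. z i = y i) \<longrightarrow> z \<in> T"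
      using x k yx by (intro exI[of _ k]) (auto simp: T_def PiE_Ed)
  qed
  moreover have "S = T \<inter> LIP Ed rg sr"
  proof
    show "S \<subseteq> T \<inter> LIP Ed rg sr"
    proof
      fix x assume x: "x \<in> S"
      obtain k where "\<forall>y\<in>LIP Ed rg sr. tail y k = tail x k \<longrightarrow> y \<in> S" using c[OF x] by blast
      then show "x \<in> T \<inter> LIP Ed rg sr" using x S LIP_sub unfolding T_def by blast
    qed
    show "T \<inter> LIP Ed rg sr \<subseteq> S"
    proof
      fix y assume "y \<in> T \<inter> LIP Ed rg sr"
      then obtain x k where y: "y \<in> LIP Ed rg sr" and k: "\<forall>z\<in>LIP Ed rg sr. tail z k = tail x k \<longrightarrow> z \<in> S"
        and yx: "\<forall>i\<le>k. y i = x i" by (auto simp: T_def)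
      then show "y \<in> S" by (simp add: tail_eq_iff)
    qed
  qed
  ultimately show ?thesis unfolding left_inf_topology_def openin_subtopology by blast
qed

lemma openin_LIT_nec:
  assumes "openin (left_inf_topology Ed rg sr) S" and x: "x \<in> S"
  shows "\<exists>k. \<forall>y\<in>LIP Ed rg sr. tail y k = tail x k \<longrightarrow> y \<in> S"
proof -
  obtain T where T: "openin (PT Ed) T" and ST: "S = T \<inter> LIP Ed rg sr"
    using assms(1) unfolding left_inf_topology_def openin_subtopology by blast
  have xT: "x \<in> T" using x ST by blast
  obtain U where fin: "finite {i \<in> UNIV. U i \<noteq> topspace (discrete_topology Ed)}"
    and xU: "x \<in> Pi\<^sub>E UNIV U" and UT: "Pi\<^sub>E UNIV U \<subseteq> T"
    using T xT unfolding openin_product_topology_alt by blast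
  define k where "k = Max (insert 0 {i. U i \<noteq> Ed})"
  have fin': "finite {i. U i \<noteq> Ed}" using fin by simp
  have big: "U i = Ed" if "i > k" for i
  proof (rule ccontr)
    assume "U i \<noteq> Ed"
    then have "i \<le> k" unfolding k_def using fin' by (intro Max_ge) auto
    then show False using that by simp
  qed
  show ?thesis
  proof (intro exI[of _ k] ballI impI)
    fix y assume y: "y \<in> LIP Ed rg sr" and t: "tail y k = tail x k"
    have "y \<in> Pi\<^sub>E UNIV U"
    proof -
      have "y i \<in> U i" for i
      proof (cases "i \<le> k")
        case True then show ?thesis using t xU by (simp add: tail_eq_iff PiE_iff)
      next
        case False then show ?thesis using big[of i] y by (simp add: left_inf_paths_def)
      qed
      then show ?thesis by (simp add: PiE_iff)
    qed
    then show "y \<in> S" using UT ST y by blast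
  qed
qed

lemma tailset_open: "openin (left_inf_topology Ed rg sr) {x \<in> LIP Ed rg sr. P (tail x k)}"
  by (rule openin_LIT_crit) (auto intro!: exI[of _ k])

lemma tailset_closed: "closedin (left_inf_topology Ed rg sr) {x \<in> LIP Ed rg sr. P (tail x k)}"
proof -
  have "topspace (left_inf_topology Ed rg sr) - {x \<in> LIP Ed rg sr. P (tail x k)} = {x \<in> LIP Ed rg sr. \<not> P (tail x k)}"
    by (auto simp: topspace_LIT)
  then show ?thesis unfolding closedin_def using tailset_open[of Ed rg sr "\<lambda>w. \<not> P w" k]
    by (simp add: topspace_LIT)
qed

lemma compact_LIT:
  assumes fin: "finite Ed"
  shows "compact_space (left_inf_topology Ed rg sr)"
proof -
  have cP: "compact_space (PT Ed)"
    using fin by (simp add: compact_space_product_topology compact_space_discrete_topology)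
  have "closedin (PT Ed) (LIP Ed rg sr)"
    unfolding closedin_def
  proof
    show "LIP Ed rg sr \<subseteq> topspace (PT Ed)" using LIP_sub by simp
    show "openin (PT Ed) (topspace (PT Ed) - LIP Ed rg sr)"
    proof (rule openin_PT_crit)
      show "topspace (PT Ed) - LIP Ed rg sr \<subseteq> (\<Pi>\<^sub>E i\<in>(UNIV::nat set). Ed)" by simp
      fix x assume x: "x \<in> topspace (PT Ed) - LIP Ed rg sr"
      then have xE: "\<forall>i. x i \<in> Ed" by (simp add: PiE_Ed)
      then obtain k where k: "sr (x (Suc k)) \<noteq> rg (x k)" using x by (auto simp: left_inf_paths_def)
      show "\<exists>k. \<forall>y. (\<forall>i. y i \<in> Ed) \<longrightarrow> (\<forall>i\<le>k. y i = x i) \<longrightarrow> y \<in> topspace (PT Ed) - LIP Ed rg sr"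
        using k by (intro exI[of _ "Suc k"]) (auto simp: PiE_Ed left_inf_paths_def intro!: exI[of _ k])
    qed
  qed
  then have "compactin (PT Ed) (LIP Ed rg sr)" using cP closedin_compact_space by blast
  then show ?thesis unfolding left_inf_topology_def using compact_space_subtopology by blast
qed



context SSA begin

lemma graphV: "e \<in> Ed \<Longrightarrow> rg e \<in> V \<and> sr e \<in> V"
proof -
  assume e: "e \<in> Ed"
  have "graph V Ed rg sr" using ssa unfolding self_similar_action_def by (elim conjE)
  then show ?thesis using e unfolding graph_def by simp
qed

definition rel :: "nat \<Rightarrow> (nat \<Rightarrow> 'e) \<Rightarrow> (nat \<Rightarrow> 'e) \<Rightarrow> bool" where
  "rel k x y \<longleftrightarrow> (\<exists>g\<in>Gr. dm g = rg (x k) \<and> act g (tail x k) = tail y k)"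

lemma rel_refl: "x \<in> LIP Ed rg sr \<Longrightarrow> rel k x x"
proof -
  assume x: "x \<in> LIP Ed rg sr"
  have v: "rg (x k) \<in> V" using x graphV by (simp add: left_inf_paths_def)
  show ?thesis unfolding rel_def
    using unit_facts[OF v] act_unit[OF v tail_path[OF x]] by blast
qed

lemma rel_trans: "x \<in> LIP Ed rg sr \<Longrightarrow> rel k x y \<Longrightarrow> rel k y z \<Longrightarrow> rel k x z"
proof -
  assume x: "x \<in> LIP Ed rg sr" and xy: "rel k x y" and yz: "rel k y z"
  obtain g where g: "g \<in> Gr" "dm g = rg (x k)" "act g (tail x k) = tail y k" using xy rel_def by blast
  obtain h where h: "h \<in> Gr" "dm h = rg (y k)" "act h (tail y k) = tail z k" using yz rel_def by blast
  have p: "tail x k \<in> PA (dm g)" using tail_path[OF x] g by simp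
  have "rg (hd (act g (tail x k))) = cd g" using cd_hd[OF g(1) p] by simp
  then have dmh: "dm h = cd g" using g h by simp
  have "mul h g \<in> Gr \<and> dm (mul h g) = dm g" using mul_facts[OF h(1) g(1) dmh] by simp
  moreover have "act (mul h g) (tail x k) = tail z k" using act_mul[OF h(1) g(1) dmh p] g h by simp
  ultimately show ?thesis unfolding rel_def using g by metis
qed

lemma rel_mono: "x \<in> LIP Ed rg sr \<Longrightarrow> rel m x y \<Longrightarrow> k \<le> m \<Longrightarrow> rel k x y"
proof -
  assume x: "x \<in> LIP Ed rg sr" and r: "rel m x y" and km: "k \<le> m"
  obtain g where g: "g \<in> Gr" "dm g = rg (x m)" "act g (tail x m) = tail y m" using r rel_def by blast
  define p where "p = take (m - k) (tail x m)"
  define p' where "p' = take (m - k) (tail y m)"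
  have sx: "tail x m = p @ tail x k" using tail_split[OF km] p_def by metis
  have sy: "tail y m = p' @ tail y k" using tail_split[OF km] p'_def by metis
  have pq: "p @ tail x k \<in> PA (dm g)" using tail_path[OF x, of m] g(2) unfolding sx by simp
  have l: "length p' = length p" by (simp add: p_def p'_def)
  note spl = act_app_split[OF g(1) pq _ l]
  have e: "act g (p @ tail x k) = p' @ tail y k" using g sx sy by simp
  have "rg (hd (tail x k)) = path_source sr (dm g) p"
    using paths_at_hd[OF paths_at_suffix[OF pq]] by simp
  then have "dm (res g p) = rg (x k)" using spl(4)[OF e] by simp
  then show ?thesis unfolding rel_def using spl(1,3)[OF e] by blast
qed

lemma e_equiv_iff: "e_equiv rg Gr dm act x y \<longleftrightarrow> (\<forall>k. rel k x y)"
  unfolding e_equiv_def rel_def by metis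

lemma ae_rel: "ae_equiv rg Gr dm act x y \<Longrightarrow> rel k x y"
  unfolding ae_equiv_def rel_def by blast

end

locale SSAQ = SSA V Ed rg sr Gr dm cd mul ginv unit act res
  for V :: "'v set" and Ed :: "'e set" and rg sr :: "'e \<Rightarrow> 'v"
    and Gr :: "'g set" and dm cd :: "'g \<Rightarrow> 'v" and mul :: "'g \<Rightarrow> 'g \<Rightarrow> 'g"
    and ginv :: "'g \<Rightarrow> 'g" and unit :: "'v \<Rightarrow> 'g"
    and act :: "'g \<Rightarrow> 'e list \<Rightarrow> 'e list" and res :: "'g \<Rightarrow> 'e list \<Rightarrow> 'g" +
  fixes J :: "'j topology" and q :: "(nat \<Rightarrow> 'e) \<Rightarrow> 'j"
  assumes quot: "quotient_map (left_inf_topology Ed rg sr) J q"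
    and fibres: "\<And>x y. x \<in> left_inf_paths Ed rg sr \<Longrightarrow> y \<in> left_inf_paths Ed rg sr \<Longrightarrow>
                   q x = q y \<longleftrightarrow> ae_equiv rg Gr dm act x y"
begin

abbreviation X where "X \<equiv> left_inf_topology Ed rg sr"

lemma q_surj: "q ` LIP Ed rg sr = topspace J"
  using quot unfolding quotient_map_def topspace_LIT by simp

lemma q_cont: "continuous_map X J q"
  using quot quotient_imp_continuous_map by blast

lemma forward:
  assumes mu: "\<mu> \<in> LIP Ed rg sr" and nu: "\<nu> \<in> LIP Ed rg sr"
    and cc: "connected_component_of J (q \<mu>) (q \<nu>)"
  shows "e_equiv rg Gr dm act \<mu> \<nu>"
  unfolding e_equiv_iff
proof
  fix k
  define U where "U = {x \<in> LIP Ed rg sr. (\<lambda>w. \<exists>g\<in>Gr. dm g = rg (\<mu> k) \<and> act g (tail \<mu> k) = w) (tail x k)}"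
  define W where "W = {x \<in> LIP Ed rg sr. (\<lambda>w. \<not> (\<exists>g\<in>Gr. dm g = rg (\<mu> k) \<and> act g (tail \<mu> k) = w)) (tail x k)}"
  have U_alt: "U = {x \<in> LIP Ed rg sr. rel k \<mu> x}" unfolding U_def rel_def by simp
  have W_alt: "W = LIP Ed rg sr - U" unfolding U_def W_def by auto
  have sat: "y \<in> U" if "x \<in> U" "y \<in> LIP Ed rg sr" "q y = q x" for x y
  proof -
    have xL: "x \<in> LIP Ed rg sr" using that U_alt by auto
    have "ae_equiv rg Gr dm act x y" using fibres[OF xL that(2)] that(3) by simp
    then have "rel k x y" by (rule ae_rel)
    then show ?thesis using that U_alt rel_trans[OF mu] by auto
  qed
  have oU: "openin X U" unfolding U_def by (rule tailset_open)
  have oW: "openin X W" unfolding W_def by (rule tailset_open)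
  have ULIP: "U \<subseteq> LIP Ed rg sr" using U_alt by auto
  have qso: "\<And>U. openin X U \<Longrightarrow> {x \<in> topspace X. q x \<in> q ` U} \<subseteq> U \<Longrightarrow> openin J (q ` U)"
    using quot unfolding quotient_map_saturated_open by blast
  have E1: "openin J (q ` U)"
  proof (rule qso[OF oU], rule subsetI)
    fix x assume "x \<in> {x \<in> topspace X. q x \<in> q ` U}"
    then obtain u where "u \<in> U" "x \<in> LIP Ed rg sr" "q x = q u" by (auto simp: topspace_LIT)
    then show "x \<in> U" using sat by blast
  qed
  have qW: "q ` W = topspace J - q ` U"
  proof
    show "q ` W \<subseteq> topspace J - q ` U"
    proof
      fix z assume "z \<in> q ` W"
      then obtain x where x: "x \<in> W" "z = q x" by blast
      have xL: "x \<in> LIP Ed rg sr" using x W_alt by blast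
      have "z \<in> topspace J" using q_surj xL x by blast
      moreover have "z \<notin> q ` U"
      proof
        assume "z \<in> q ` U"
        then obtain u where "u \<in> U" "q x = q u" using x(2) by auto
        then have "x \<in> U" using sat xL by blast
        then show False using x W_alt by blast
      qed
      ultimately show "z \<in> topspace J - q ` U" by blast
    qed
    show "topspace J - q ` U \<subseteq> q ` W"
    proof
      fix z assume z: "z \<in> topspace J - q ` U"
      then obtain x where x: "x \<in> LIP Ed rg sr" "z = q x" using q_surj by blast
      then have "x \<notin> U" using z by blast
      then have "x \<in> W" using x W_alt by blast
      then show "z \<in> q ` W" using x by blast
    qed
  qed
  have E2: "openin J (topspace J - q ` U)"
    unfolding qW[symmetric]
  proof (rule qso[OF oW], rule subsetI)
    fix x assume "x \<in> {x \<in> topspace X. q x \<in> q ` W}"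
    then obtain w where w: "w \<in> W" and xL: "x \<in> LIP Ed rg sr" and e: "q x = q w" by (auto simp: topspace_LIT)
    have wL: "w \<in> LIP Ed rg sr" using w W_alt by blast
    have "x \<notin> U"
    proof
      assume "x \<in> U"
      then have "w \<in> U" using sat[OF _ wL] e by metis
      then show False using w W_alt by blast
    qed
    then show "x \<in> W" using xL W_alt by blast
  qed
  obtain T where T: "connectedin J T" "q \<mu> \<in> T" "q \<nu> \<in> T"
    using cc unfolding connected_component_of_def by blast
  have TJ: "T \<subseteq> topspace J" using T(1) connectedin_subset_topspace by blast
  have muU: "\<mu> \<in> U" using U_alt rel_refl[OF mu] mu by simp
  have "q \<nu> \<in> q ` U"
  proof (rule ccontr)
    assume "q \<nu> \<notin> q ` U"
    then have "q \<nu> \<in> (topspace J - q ` U) \<inter> T" using T TJ by blast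
    moreover have "q \<mu> \<in> q ` U \<inter> T" using muU T by blast
    ultimately show False
      using connectedinD[OF T(1) E1 E2] TJ by blast
  qed
  then have "\<nu> \<in> U" using sat nu by blast
  then show "rel k \<mu> \<nu>" using U_alt by simp
qed

end


lemma rtrancl_sym:
  assumes "(a, b) \<in> R\<^sup>*" and "\<And>x y. (x, y) \<in> R \<Longrightarrow> (y, x) \<in> R"
  shows "(b, a) \<in> R\<^sup>*"
  using assms(1)
proof (induction rule: rtrancl_induct)
  case base then show ?case by simp
next
  case (step y z)
  then show ?case using assms(2) by (meson converse_rtrancl_into_rtrancl)
qed

locale SSAF = SSAQ V Ed rg sr Gr dm cd mul ginv unit act res J q
  for V :: "'v set" and Ed :: "'e set" and rg sr :: "'e \<Rightarrow> 'v"
    and Gr :: "'g set" and dm cd :: "'g \<Rightarrow> 'v" and mul :: "'g \<Rightarrow> 'g \<Rightarrow> 'g"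
    and ginv :: "'g \<Rightarrow> 'g" and unit :: "'v \<Rightarrow> 'g"
    and act :: "'g \<Rightarrow> 'e list \<Rightarrow> 'e list" and res :: "'g \<Rightarrow> 'e list \<Rightarrow> 'g"
    and J :: "'j topology" and q :: "(nat \<Rightarrow> 'e) \<Rightarrow> 'j" +
  fixes S :: "'g set" and F :: "'g set" and \<mu> :: "nat \<Rightarrow> 'e"
  assumes finE: "finite Ed"
    and finS: "finite S" and SGr: "S \<subseteq> Gr" and genS: "Gr = gen_groupoid V dm cd mul ginv unit S"
    and finF: "finite F" and FGr: "F \<subseteq> Gr"
    and contrF: "\<forall>g\<in>Gr. \<exists>n. \<forall>p\<in>paths_at Ed rg sr (dm g). length p \<ge> n \<longrightarrow> res g p \<in> F"
    and mu: "\<mu> \<in> left_inf_paths Ed rg sr"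
begin

lemma N_exists: "\<exists>N. 1 \<le> N \<and> (\<forall>s\<in>S. \<forall>p\<in>PA (dm s). N \<le> length p \<longrightarrow> res s p \<in> F)"
proof -
  have "\<forall>s\<in>S. \<exists>n. \<forall>p\<in>PA (dm s). n \<le> length p \<longrightarrow> res s p \<in> F" using contrF SGr by blast
  then obtain nf where nf: "\<forall>s\<in>S. \<forall>p\<in>PA (dm s). nf s \<le> length p \<longrightarrow> res s p \<in> F" by metis
  define N where "N = Max (insert 1 (nf ` S))"
  have "nf s \<le> N" if "s \<in> S" for s unfolding N_def using finS that by (intro Max_ge) auto
  moreover have "1 \<le> N" unfolding N_def using finS by (intro Max_ge) auto
  ultimately show ?thesis using nf by (meson le_trans)
qed

definition N where "N = (SOME N. 1 \<le> N \<and> (\<forall>s\<in>S. \<forall>p\<in>PA (dm s). N \<le> length p \<longrightarrow> res s p \<in> F))"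

lemma N_facts: "1 \<le> N" "s \<in> S \<Longrightarrow> p \<in> PA (dm s) \<Longrightarrow> N \<le> length p \<Longrightarrow> res s p \<in> F"
  using someI_ex[OF N_exists] unfolding N_def[symmetric] by blast+

definition stp :: "('e list \<times> 'e list) set" where
  "stp = {(w, w'). \<exists>s\<in>S. (w \<in> PA (dm s) \<and> w' = act s w) \<or> (w' \<in> PA (dm s) \<and> w = act s w')}"

lemma stp_sym: "(w, w') \<in> stp \<Longrightarrow> (w', w) \<in> stp"
  unfolding stp_def by blast

lemma gen_chain:
  assumes "g \<in> gen_groupoid V dm cd mul ginv unit S"
  shows "w \<in> PA (dm g) \<Longrightarrow> (w, act g w) \<in> stp\<^sup>*"
  using assms
proof (induction arbitrary: w rule: gen_groupoid.induct)
  case (gen_unit v)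
  then show ?case using unit_facts act_unit by simp
next
  case (gen_base g)
  then show ?case unfolding stp_def by blast
next
  case (gen_inv g)
  have g: "g \<in> Gr" using gen_inv.hyps genS by simp
  have w: "w \<in> PA (cd g)" using gen_inv.prems inv_facts[OF g] by simp
  obtain w0 where w0: "w0 \<in> PA (dm g)" "w = act g w0"
    using w bij_betw_imp_surj_on[OF act_bij[OF g]] by blast
  have "act (ginv g) w = w0" using act_inv[OF g w0(1)] w0 by simp
  then show ?case using gen_inv.IH[OF w0(1)] w0 rtrancl_sym stp_sym by metis
next
  case (gen_mul g h)
  have g: "g \<in> Gr" and h: "h \<in> Gr" using gen_mul.hyps genS by auto
  have w: "w \<in> PA (dm h)" using gen_mul.prems mul_facts[OF g h gen_mul.hyps(3)] by simp
  have w1: "act h w \<in> PA (dm g)" using act_in[OF h w] gen_mul.hyps(3) by simp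
  have "(w, act h w) \<in> stp\<^sup>*" using gen_mul.IH(2)[OF w] .
  moreover have "(act h w, act g (act h w)) \<in> stp\<^sup>*" using gen_mul.IH(1)[OF w1] .
  ultimately show ?case using act_mul[OF g h gen_mul.hyps(3) w] by simp
qed

definition orb :: "nat \<Rightarrow> 'e list \<Rightarrow> bool" where
  "orb m w \<longleftrightarrow> (\<exists>g\<in>Gr. dm g = rg (\<mu> m) \<and> act g (tail \<mu> m) = w)"

lemma orb_rel: "orb m (tail x m) \<longleftrightarrow> rel m \<mu> x"
  unfolding orb_def rel_def by simp

lemma orb_PA: "orb m w \<Longrightarrow> \<exists>g\<in>Gr. w \<in> PA (cd g) \<and> length w = Suc m"
  unfolding orb_def using act_in act_len tail_path[OF mu] by fastforce

lemma orb_len: "orb m w \<Longrightarrow> length w = Suc m"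
  using orb_PA by blast

lemma orb_path: "orb m w \<Longrightarrow> is_path Ed rg sr w"
  using orb_PA by (auto simp: paths_at_def)

lemma orb_act: "orb m w \<Longrightarrow> h \<in> Gr \<Longrightarrow> w \<in> PA (dm h) \<Longrightarrow> orb m (act h w)"
proof -
  assume o: "orb m w" and h: "h \<in> Gr" and wh: "w \<in> PA (dm h)"
  obtain g where g: "g \<in> Gr" "dm g = rg (\<mu> m)" "act g (tail \<mu> m) = w" using o orb_def by blast
  have p: "tail \<mu> m \<in> PA (dm g)" using tail_path[OF mu] g by simp
  have "rg (hd w) = cd g" using cd_hd[OF g(1) p] g by simp
  moreover have "rg (hd w) = dm h" using wh paths_at_hd g(3) act_len[OF g(1) p] by (metis length_0_conv tail_ne)
  ultimately have dmh: "dm h = cd g" by simp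
  show ?thesis unfolding orb_def
    using mul_facts[OF h g(1) dmh] act_mul[OF h g(1) dmh p] g by metis
qed

lemma orb_stp: "orb m w \<Longrightarrow> (w, w') \<in> stp \<Longrightarrow> orb m w'"
proof -
  assume o: "orb m w" and st: "(w, w') \<in> stp"
  then obtain s where s: "s \<in> S" and c: "(w \<in> PA (dm s) \<and> w' = act s w) \<or> (w' \<in> PA (dm s) \<and> w = act s w')"
    unfolding stp_def by blast
  have sG: "s \<in> Gr" using s SGr by blast
  show ?thesis
  proof (cases "w \<in> PA (dm s) \<and> w' = act s w")
    case True then show ?thesis using orb_act[OF o sG] by simp
  next
    case False
    then have w': "w' \<in> PA (dm s)" and ww: "w = act s w'" using c by auto
    have "w \<in> PA (dm (ginv s))" using act_in[OF sG w'] ww inv_facts[OF sG] by simp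
    moreover have "act (ginv s) w = w'" using act_inv[OF sG w'] ww by simp
    ultimately show ?thesis using orb_act[OF o] inv_facts[OF sG] by metis
  qed
qed

lemma orb_chain: "(w, w') \<in> stp\<^sup>* \<Longrightarrow> orb m w \<Longrightarrow> orb m w'"
  by (induction rule: rtrancl_induct) (auto intro: orb_stp)

lemma orb_drop: "orb m w \<Longrightarrow> k \<le> m \<Longrightarrow> orb k (drop (m - k) w)"
proof -
  assume o: "orb m w" and km: "k \<le> m"
  obtain g where g: "g \<in> Gr" "dm g = rg (\<mu> m)" "act g (tail \<mu> m) = w" using o orb_def by blast
  define p where "p = take (m - k) (tail \<mu> m)"
  define p' where "p' = take (m - k) w"
  have sx: "tail \<mu> m = p @ tail \<mu> k" using tail_split[OF km] p_def by metis
  have lw: "length w = Suc m" using orb_len[OF o] .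
  have sy: "w = p' @ drop (m - k) w" using p'_def by simp
  have pq: "p @ tail \<mu> k \<in> PA (dm g)" using tail_path[OF mu, of m] g(2) unfolding sx by simp
  have l: "length p' = length p" using lw km by (simp add: p_def p'_def)
  note spl = act_app_split[OF g(1) pq _ l]
  have e: "act g (p @ tail \<mu> k) = p' @ drop (m - k) w" using g sx sy by simp
  have "rg (hd (tail \<mu> k)) = path_source sr (dm g) p"
    using paths_at_hd[OF paths_at_suffix[OF pq]] by simp
  then have "dm (res g p) = rg (\<mu> k)" using spl(4)[OF e] by simp
  then show ?thesis unfolding orb_def using spl(1,3)[OF e] by blast
qed

lemma orb_suffix: "orb m (u @ w) \<Longrightarrow> length w = Suc k \<Longrightarrow> orb k w"
proof -
  assume o: "orb m (u @ w)" and l: "length w = Suc k"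
  have lm: "length u + Suc k = Suc m" using orb_len[OF o] l by simp
  then have "k \<le> m" by simp
  from orb_drop[OF o this] show ?thesis using lm by simp
qed

lemma e_equiv_orb: "e_equiv rg Gr dm act \<mu> x \<longleftrightarrow> (\<forall>k. orb k (tail x k))"
  using e_equiv_iff orb_rel by simp

end


context SSAF begin

definition good :: "nat \<Rightarrow> nat \<Rightarrow> 'e list \<Rightarrow> 'e list \<Rightarrow> bool" where
  "good n L r r' \<longleftrightarrow> (\<exists>s\<in>S. \<exists>w w'. L + N \<le> length w \<and> w @ r \<in> PA (dm s) \<and>
      orb (n + length w) (w @ r) \<and> act s (w @ r) = w' @ r' \<and> length w' = length w)"

lemma good_mono: "good n L' r r' \<Longrightarrow> L \<le> L' \<Longrightarrow> good n L r r'"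
  unfolding good_def by (meson add_le_mono1 le_trans)

lemma good_W: "good n L r r' \<Longrightarrow> length r = Suc n \<and> set r \<subseteq> Ed \<and> length r' = Suc n \<and> set r' \<subseteq> Ed"
proof -
  assume "good n L r r'"
  then obtain s w w' where s: "s \<in> S" and wr: "w @ r \<in> PA (dm s)" and o: "orb (n + length w) (w @ r)"
    and e: "act s (w @ r) = w' @ r'" and l: "length w' = length w" unfolding good_def by blast
  have sG: "s \<in> Gr" using s SGr by blast
  have lr: "length r = Suc n" using orb_len[OF o] by simp
  moreover have "set r \<subseteq> Ed" using paths_at_Ed[OF wr] by simp
  moreover have "length r' = Suc n" using act_len[OF sG wr] e l lr by simp
  moreover have "set r' \<subseteq> Ed" using paths_at_Ed[OF act_in[OF sG wr]] e by simp
  ultimately show ?thesis by blast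
qed

lemma good_stab: "\<exists>M. \<forall>r r'. good n M r r' \<longrightarrow> (\<forall>L. good n L r r')"
proof -
  define W where "W = {r. set r \<subseteq> Ed \<and> length r = Suc n}"
  have finW: "finite W" unfolding W_def using finite_lists_length_eq[OF finE] by simp
  define B where "B = {rr \<in> W \<times> W. \<exists>L. \<not> good n L (fst rr) (snd rr)}"
  have finB: "finite B" using finW unfolding B_def by simp
  define f where "f = (\<lambda>rr. SOME L. \<not> good n L (fst rr) (snd rr))"
  define M where "M = Max (insert 0 (f ` B))"
  show ?thesis
  proof (intro exI[of _ M] allI impI)
    fix r r' L assume gM: "good n M r r'"
    show "good n L r r'"
    proof (rule ccontr)
      assume ng: "\<not> good n L r r'"
      have "(r, r') \<in> B" unfolding B_def W_def using good_W[OF gM] ng by auto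
      then have le: "f (r, r') \<le> M" unfolding M_def using finB by (intro Max_ge) auto
      have "\<not> good n (f (r, r')) r r'" unfolding f_def using ng by (metis (mono_tags, lifting) fst_conv snd_conv someI_ex)
      then show False using good_mono[OF gM le] by simp
    qed
  qed
qed

definition node :: "nat \<Rightarrow> 'e list \<Rightarrow> 'e list \<Rightarrow> nat \<Rightarrow> 'e list \<Rightarrow> 'e list \<Rightarrow> bool" where
  "node n r r' L p p' \<longleftrightarrow> length p = L \<and> length p' = L \<and>
     (\<exists>s\<in>S. \<exists>u u'. N \<le> length u \<and> u @ p @ r \<in> PA (dm s) \<and> orb (n + length u + L) (u @ p @ r) \<and>
        act s (u @ p @ r) = u' @ p' @ r' \<and> length u' = length u)"

lemma node_drop:
  assumes "node n r r' L (v @ p) (v' @ p')" and "length v = length v'"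
  shows "node n r r' (L - length v) p p'"
proof -
  obtain s u u' where s: "s \<in> S" and Nu: "N \<le> length u" and P: "u @ (v @ p) @ r \<in> PA (dm s)"
    and o: "orb (n + length u + L) (u @ (v @ p) @ r)" and e: "act s (u @ (v @ p) @ r) = u' @ (v' @ p') @ r'"
    and lu: "length u' = length u" and l1: "length (v @ p) = L" and l2: "length (v' @ p') = L"
    using assms(1) unfolding node_def by blast
  have L1: "length p = L - length v" "length p' = L - length v" using l1 l2 assms(2) by auto
  have eq: "n + length (u @ v) + (L - length v) = n + length u + L" using l1 by auto
  have X: "N \<le> length (u @ v) \<and> (u @ v) @ p @ r \<in> PA (dm s) \<and>
     orb (n + length (u @ v) + (L - length v)) ((u @ v) @ p @ r) \<and>
     act s ((u @ v) @ p @ r) = (u' @ v') @ p' @ r' \<and> length (u' @ v') = length (u @ v)"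
    unfolding eq using Nu P o e lu assms(2) by simp
  show ?thesis unfolding node_def using L1 X s by blast
qed

lemma node_Ed: "node n r r' L p p' \<Longrightarrow> set p \<subseteq> Ed \<and> set p' \<subseteq> Ed"
proof -
  assume "node n r r' L p p'"
  then obtain s u u' where s: "s \<in> S" and P: "u @ p @ r \<in> PA (dm s)"
    and e: "act s (u @ p @ r) = u' @ p' @ r'" unfolding node_def by blast
  have sG: "s \<in> Gr" using s SGr by blast
  show ?thesis using paths_at_Ed[OF P] paths_at_Ed[OF act_in[OF sG P]] e by auto
qed

lemma good_node: "good n (L::nat) r r' \<Longrightarrow> \<exists>p p'. node n r r' L p p'"
proof -
  assume "good n L r r'"
  then obtain s w w' where s: "s \<in> S" and LN: "L + N \<le> length w" and wr: "w @ r \<in> PA (dm s)"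
    and o: "orb (n + length w) (w @ r)"
    and e: "act s (w @ r) = w' @ r'" and l: "length w' = length w" unfolding good_def by blast
  define d where "d = length w - L"
  have ww: "take d w @ drop d w @ r = w @ r" "take d w' @ drop d w' @ r' = w' @ r'"
    by (simp_all only: append_assoc[symmetric] append_take_drop_id)
  show ?thesis unfolding node_def
  proof (intro exI conjI bexI[OF _ s] exI[of _ "take d w"] exI[of _ "take d w'"])
    show "length (drop d w) = L" "length (drop d w') = L" using LN l by (auto simp: d_def)
    show "N \<le> length (take d w)" using LN by (auto simp: d_def)
    show "take d w @ drop d w @ r \<in> PA (dm s)" unfolding ww by (rule wr)
    have eq: "n + length (take d w) + L = n + length w" using LN by (auto simp: d_def)
    show "orb (n + length (take d w) + L) (take d w @ drop d w @ r)" unfolding eq ww by (rule o)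
    show "act s (take d w @ drop d w @ r) = take d w' @ drop d w' @ r'" unfolding ww by (rule e)
    show "length (take d w') = length (take d w)" using l by simp
  qed
qed

definition ext :: "nat \<Rightarrow> 'e list \<Rightarrow> 'e list \<Rightarrow> 'e list \<Rightarrow> 'e list \<Rightarrow> bool" where
  "ext n r r' p p' \<longleftrightarrow> (\<forall>L\<ge>length p. \<exists>v v'. length v = L - length p \<and> length v' = L - length p \<and>
      node n r r' L (v @ p) (v' @ p'))"

lemma ext_root: "(\<forall>L. good n L r r') \<Longrightarrow> ext n r r' [] []"
  unfolding ext_def
proof (intro allI impI)
  fix L assume "\<forall>L. good n L r r'"
  then obtain p p' where nd: "node n r r' L p p'" using good_node by blast
  then have "length p = L" "length p' = L" unfolding node_def by auto
  then show "\<exists>v v'. length v = L - length [] \<and> length v' = L - length [] \<and> node n r r' L (v @ []) (v' @ [])"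
    using nd by auto
qed

lemma ext_len: "ext n r r' p p' \<Longrightarrow> length p' = length p"
proof -
  assume "ext n r r' p p'"
  then obtain v v' where "length v = 0" "length v' = 0" "node n r r' (length p) (v @ p) (v' @ p')"
    unfolding ext_def by (metis diff_self_eq_0 order_refl)
  then show ?thesis unfolding node_def by simp
qed

lemma ext_step:
  assumes ex: "ext n r r' p p'"
  shows "\<exists>e e'. ext n r r' (e # p) (e' # p')"
proof (rule ccontr)
  assume H: "\<not> (\<exists>e e'. ext n r r' (e # p) (e' # p'))"
  have "\<forall>e e'. \<exists>L\<ge>Suc (length p). \<not> (\<exists>v v'. length v = L - Suc (length p) \<and> length v' = L - Suc (length p) \<and>
      node n r r' L (v @ e # p) (v' @ e' # p'))"
    using H unfolding ext_def by auto
  then obtain Lb where Lb: "\<And>e e'. Lb e e' \<ge> Suc (length p)"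
    "\<And>e e'. \<not> (\<exists>v v'. length v = Lb e e' - Suc (length p) \<and> length v' = Lb e e' - Suc (length p) \<and>
      node n r r' (Lb e e') (v @ e # p) (v' @ e' # p'))"
    by metis
  define Ls where "Ls = Max (insert (Suc (length p)) ((\<lambda>(e, e'). Lb e e') ` (Ed \<times> Ed)))"
  have finI: "finite (insert (Suc (length p)) ((\<lambda>(e, e'). Lb e e') ` (Ed \<times> Ed)))" using finE by simp
  have Ls1: "Suc (length p) \<le> Ls" unfolding Ls_def using finI by (intro Max_ge) auto
  obtain v v' where lv: "length v = Ls - length p" and lv': "length v' = Ls - length p"
    and nd: "node n r r' Ls (v @ p) (v' @ p')"
    using ex Ls1 unfolding ext_def by (meson Suc_leD)
  have vne: "v \<noteq> []" "v' \<noteq> []" using lv lv' Ls1 by auto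
  define e where "e = last v"
  define e' where "e' = last v'"
  define v1 where "v1 = butlast v"
  define v1' where "v1' = butlast v'"
  have vv: "v = v1 @ [e]" "v' = v1' @ [e']" using vne by (simp_all add: v1_def e_def v1'_def e'_def)
  have nd1: "node n r r' Ls (v1 @ e # p) (v1' @ e' # p')" using nd vv by simp
  have eE: "e \<in> Ed" "e' \<in> Ed" using node_Ed[OF nd] vv by auto
  have L0le: "Lb e e' \<le> Ls" unfolding Ls_def using finI eE by (intro Max_ge) auto
  define d where "d = Ls - Lb e e'"
  have lv1: "length v1 = Ls - Suc (length p)" "length v1' = Ls - Suc (length p)" using vv lv lv' by auto
  have dle: "d \<le> length v1" using lv1 Lb(1)[of e e'] by (simp add: d_def)
  have nd2: "node n r r' Ls (take d v1 @ (drop d v1 @ e # p)) (take d v1' @ (drop d v1' @ e' # p'))"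
    unfolding append_assoc[symmetric] append_take_drop_id by (rule nd1)
  have "node n r r' (Ls - length (take d v1)) (drop d v1 @ e # p) (drop d v1' @ e' # p')"
    using node_drop[OF nd2] dle lv1 by simp
  moreover have "Ls - length (take d v1) = Lb e e'" using dle L0le by (simp add: d_def)
  moreover have "length (drop d v1) = Lb e e' - Suc (length p)" "length (drop d v1') = Lb e e' - Suc (length p)"
    using lv1 dle L0le Lb(1)[of e e'] by (auto simp: d_def)
  ultimately show False using Lb(2)[of e e'] by metis
qed

end


lemma tail_fun: "length r = Suc n \<Longrightarrow> tail (\<lambda>k. if k \<le> n then r ! (n - k) else f k) n = r"
  by (rule nth_equalityI) (auto simp: tail_def rev_nth nth_append simp del: upt_Suc)

lemma is_path_tail_le: "is_path Ed rg sr (tail x m) \<Longrightarrow> k \<le> m \<Longrightarrow> is_path Ed rg sr (tail x k)"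
proof -
  assume h: "is_path Ed rg sr (tail x m)" and km: "k \<le> m"
  have e: "tail x m = take (m - k) (tail x m) @ tail x k" using tail_split[OF km] .
  have "is_path Ed rg sr (take (m - k) (tail x m) @ tail x k)" using h e by simp
  then show ?thesis using is_path_append by blast
qed

context SSAF begin

lemma ext_seq:
  assumes "ext n r r' [] []"
  shows "\<exists>X Y. X 0 = [] \<and> Y 0 = [] \<and> (\<forall>j. ext n r r' (X j) (Y j)) \<and>
           (\<forall>j. \<exists>e e'. X (Suc j) = e # X j \<and> Y (Suc j) = e' # Y j)"
proof -
  define P where "P = (\<lambda>pq pq'. \<exists>e e'. pq' = (e # fst pq, e' # snd pq) \<and> ext n r r' (fst pq') (snd pq'))"
  define nx where "nx = (\<lambda>pq. SOME pq'. P pq pq')"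
  define XY where "XY = rec_nat ([], []) (\<lambda>_. nx)"
  have XY0: "XY 0 = ([], [])" and XYS: "\<And>j. XY (Suc j) = nx (XY j)" by (simp_all add: XY_def)
  have nxP: "P pq (nx pq)" if h: "ext n r r' (fst pq) (snd pq)" for pq
  proof -
    obtain e e' where "ext n r r' (e # fst pq) (e' # snd pq)" using ext_step[OF h] by blast
    then have "\<exists>pq'. P pq pq'" unfolding P_def by auto
    then show ?thesis unfolding nx_def by (rule someI_ex)
  qed
  have E: "ext n r r' (fst (XY j)) (snd (XY j))" for j
  proof (induction j)
    case 0 then show ?case using assms XY0 by simp
  next
    case (Suc j)
    then show ?case using nxP[OF Suc] XYS unfolding P_def by auto
  qed
  have St: "\<exists>e e'. fst (XY (Suc j)) = e # fst (XY j) \<and> snd (XY (Suc j)) = e' # snd (XY j)" for j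
    using nxP[OF E[of j]] XYS unfolding P_def by auto
  show ?thesis
    by (rule exI[of _ "\<lambda>j. fst (XY j)"], rule exI[of _ "\<lambda>j. snd (XY j)"]) (use XY0 E St in auto)
qed

lemma link:
  assumes allg: "\<forall>L. good n L r r'"
  shows "\<exists>x y. x \<in> LIP Ed rg sr \<and> y \<in> LIP Ed rg sr \<and> e_equiv rg Gr dm act \<mu> x \<and>
           ae_equiv rg Gr dm act x y \<and> tail x n = r \<and> tail y n = r'"
proof -
  have lr: "length r = Suc n" "length r' = Suc n" using good_W allg by blast+
  obtain X Y where X0: "X 0 = []" and Y0: "Y 0 = []" and Ex: "\<And>j. ext n r r' (X j) (Y j)"
    and St: "\<And>j. \<exists>e e'. X (Suc j) = e # X j \<and> Y (Suc j) = e' # Y j"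
    using ext_seq[OF ext_root[OF allg]] by blast
  define ex where "ex j = hd (X (Suc j))" for j
  define ey where "ey j = hd (Y (Suc j))" for j
  have XS: "X (Suc j) = ex j # X j" and YS: "Y (Suc j) = ey j # Y j" for j
    using St[of j] by (auto simp: ex_def ey_def)
  have lX: "length (X j) = j" for j by (induction j) (simp_all add: X0 XS)
  define x where "x k = (if k \<le> n then r ! (n - k) else ex (k - Suc n))" for k
  define y where "y k = (if k \<le> n then r' ! (n - k) else ey (k - Suc n))" for k
  have tx: "tail x (n + j) = X j @ r" for j
  proof (induction j)
    case 0 then show ?case using tail_fun[OF lr(1)] X0 by (simp add: x_def[abs_def])
  next
    case (Suc j)
    have a: "x (Suc (n + j)) = ex j" by (simp add: x_def)
    show ?case using tail_Suc[of x "n + j"] a Suc.IH XS[of j] by simp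
  qed
  have ty: "tail y (n + j) = Y j @ r'" for j
  proof (induction j)
    case 0 then show ?case using tail_fun[OF lr(2)] Y0 by (simp add: y_def[abs_def])
  next
    case (Suc j)
    have a: "y (Suc (n + j)) = ey j" by (simp add: y_def)
    show ?case using tail_Suc[of y "n + j"] a Suc.IH YS[of j] by simp
  qed
  have nd: "node n r r' j (X j) (Y j)" for j
  proof -
    have "\<forall>L\<ge>length (X j). \<exists>v v'. length v = L - length (X j) \<and> length v' = L - length (X j) \<and>
      node n r r' L (v @ X j) (v' @ Y j)" using Ex[of j] unfolding ext_def .
    then obtain v v' where "length v = j - length (X j)" "length v' = j - length (X j)"
      "node n r r' j (v @ X j) (v' @ Y j)" using lX[of j] by auto
    then show ?thesis using lX by simp
  qed
  have W: "\<exists>s\<in>S. \<exists>u u'. N \<le> length u \<and> u @ (X j @ r) \<in> PA (dm s) \<and> orb (n + length u + j) (u @ (X j @ r)) \<and>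
        act s (u @ (X j @ r)) = u' @ (Y j @ r') \<and> length u' = length u" for j
    using nd[of j] unfolding node_def by simp
  have px: "is_path Ed rg sr (tail x (n + j))" for j
  proof -
    obtain s u where "u @ (X j @ r) \<in> PA (dm s)" using W[of j] by blast
    then have "X j @ r \<in> PA (path_source sr (dm s) u)" by (rule paths_at_suffix)
    then show ?thesis unfolding tx paths_at_def by simp
  qed
  have py: "is_path Ed rg sr (tail y (n + j))" for j
  proof -
    obtain s u u' where s: "s \<in> S" and P: "u @ (X j @ r) \<in> PA (dm s)" and e: "act s (u @ (X j @ r)) = u' @ (Y j @ r')"
      using W[of j] by blast
    have "u' @ (Y j @ r') \<in> PA (cd s)" using act_in[OF _ P] e s SGr by auto
    then have "Y j @ r' \<in> PA (path_source sr (cd s) u')" by (rule paths_at_suffix)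
    then show ?thesis unfolding ty paths_at_def by simp
  qed
  have xL: "x \<in> LIP Ed rg sr"
  proof (rule LIP_intro)
    fix k show "is_path Ed rg sr (tail x k)" using is_path_tail_le[OF px[of k]] by simp
  qed
  have yL: "y \<in> LIP Ed rg sr"
  proof (rule LIP_intro)
    fix k show "is_path Ed rg sr (tail y k)" using is_path_tail_le[OF py[of k]] by simp
  qed
  have ox: "orb (n + j) (tail x (n + j))" for j
  proof -
    obtain s u where "orb (n + length u + j) (u @ (X j @ r))" using W[of j] by blast
    then show ?thesis unfolding tx using orb_suffix lX lr by simp
  qed
  have ee: "e_equiv rg Gr dm act \<mu> x"
    unfolding e_equiv_orb
  proof
    fix k
    have "orb k (drop (n + k - k) (tail x (n + k)))" using orb_drop[OF ox[of k], of k] by simp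
    then show "orb k (tail x k)" using tail_drop[of k "n + k" x] by simp
  qed
  have Hk: "\<exists>g\<in>F. dm g = rg (x (n + j)) \<and> act g (tail x (n + j)) = tail y (n + j)" for j
  proof -
    obtain s u u' where s: "s \<in> S" and Nu: "N \<le> length u" and P: "u @ (X j @ r) \<in> PA (dm s)"
      and e: "act s (u @ (X j @ r)) = u' @ (Y j @ r')" and l: "length u' = length u"
      using W[of j] by blast
    have sG: "s \<in> Gr" using s SGr by blast
    note spl = act_app_split[OF sG P e l]
    have "res s u \<in> F" using N_facts(2)[OF s paths_at_prefix[OF P] Nu] .
    moreover have "dm (res s u) = rg (x (n + j))"
    proof -
      have rne: "X j @ r \<noteq> []" using lr by auto
      have "rg (hd (X j @ r)) = path_source sr (dm s) u" using paths_at_hd[OF paths_at_suffix[OF P] rne] .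
      moreover have "hd (X j @ r) = x (n + j)" using hd_tail[of x "n + j"] tx[of j] by simp
      ultimately show ?thesis using spl(4) by simp
    qed
    moreover have "act (res s u) (tail x (n + j)) = tail y (n + j)" using spl(1) tx ty by simp
    ultimately show ?thesis by blast
  qed
  have Hall: "\<exists>g. g \<in> Gr \<and> dm g = rg (x k) \<and> act g (tail x k) = tail y k \<and> (n \<le> k \<longrightarrow> g \<in> F)" for k
  proof (cases "n \<le> k")
    case True
    then obtain j where "k = n + j" using le_Suc_ex by blast
    then show ?thesis using Hk[of j] FGr by blast
  next
    case False
    have "rel n x y" using Hk[of 0] FGr unfolding rel_def by auto
    then have "rel k x y" using rel_mono[OF xL] False by simp
    then show ?thesis using False unfolding rel_def by blast
  qed
  then have Hall': "\<forall>k. \<exists>g. g \<in> Gr \<and> dm g = rg (x k) \<and> act g (tail x k) = tail y k \<and> (n \<le> k \<longrightarrow> g \<in> F)" by blast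
  obtain G where G0: "\<forall>k. G k \<in> Gr \<and> dm (G k) = rg (x k) \<and> act (G k) (tail x k) = tail y k \<and> (n \<le> k \<longrightarrow> G k \<in> F)"
    by (rule exE[OF choice[OF Hall']])
  then have G: "\<And>k. G k \<in> Gr \<and> dm (G k) = rg (x k) \<and> act (G k) (tail x k) = tail y k \<and> (n \<le> k \<longrightarrow> G k \<in> F)"
    by blast
  have ae: "ae_equiv rg Gr dm act x y"
    unfolding ae_equiv_def
  proof (intro exI[of _ "F \<union> G ` {..<n}"] exI[of _ G] conjI allI)
    show "finite (F \<union> G ` {..<n})" using finF by simp
    show "F \<union> G ` {..<n} \<subseteq> Gr" using FGr G by blast
    fix k
    show "G k \<in> F \<union> G ` {..<n}" using G[of k] by (cases "n \<le> k") auto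
    show "dm (G k) = rg (x k)" "act (G k) (tail x k) = tail y k" using G by auto
  qed
  show ?thesis using xL yL ee ae tx[of 0] ty[of 0] X0 Y0 by auto
qed

end


context SSAF begin

definition Aset where "Aset = {x \<in> LIP Ed rg sr. e_equiv rg Gr dm act \<mu> x}"

definition Rn :: "nat \<Rightarrow> ((nat \<Rightarrow> 'e) \<times> (nat \<Rightarrow> 'e)) set" where
  "Rn n = {(x, y). x \<in> Aset \<and> y \<in> Aset \<and> (tail x n = tail y n \<or> ae_equiv rg Gr dm act x y \<or> ae_equiv rg Gr dm act y x)}"

lemma A_ae: "x \<in> Aset \<Longrightarrow> y \<in> LIP Ed rg sr \<Longrightarrow> ae_equiv rg Gr dm act x y \<Longrightarrow> y \<in> Aset"
  unfolding Aset_def e_equiv_iff using rel_trans[OF mu] ae_rel by blast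

lemma link_A:
  assumes "\<forall>L. good n L r r'"
  shows "\<exists>x y. x \<in> Aset \<and> y \<in> Aset \<and> ae_equiv rg Gr dm act x y \<and> tail x n = r \<and> tail y n = r'"
proof -
  obtain x y where "x \<in> LIP Ed rg sr" "y \<in> LIP Ed rg sr" "e_equiv rg Gr dm act \<mu> x"
    "ae_equiv rg Gr dm act x y" "tail x n = r" "tail y n = r'"
    using link[OF assms] by blast
  then show ?thesis using A_ae unfolding Aset_def by blast
qed

lemma goodstep:
  assumes o: "orb (n + N + M) w1" and s: "s \<in> S" and P: "w1 \<in> PA (dm s)" and e: "w2 = act s w1"
  shows "good n M (drop (N + M) w1) (drop (N + M) w2)"
proof -
  have sG: "s \<in> Gr" using s SGr by blast
  have l1: "length w1 = Suc (n + N + M)" using orb_len[OF o] .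
  have l2: "length w2 = length w1" using act_len[OF sG P] e by simp
  have x1: "take (N + M) w1 @ drop (N + M) w1 = w1" and x2: "take (N + M) w2 @ drop (N + M) w2 = w2" by simp_all
  have lt: "length (take (N + M) w1) = N + M" "length (take (N + M) w2) = N + M" using l1 l2 by auto
  have eq: "n + length (take (N + M) w1) = n + N + M" using lt by simp
  have X: "M + N \<le> length (take (N + M) w1) \<and> take (N + M) w1 @ drop (N + M) w1 \<in> PA (dm s) \<and>
    orb (n + length (take (N + M) w1)) (take (N + M) w1 @ drop (N + M) w1) \<and>
    act s (take (N + M) w1 @ drop (N + M) w1) = take (N + M) w2 @ drop (N + M) w2 \<and>
    length (take (N + M) w2) = length (take (N + M) w1)"
    unfolding eq x1 x2 using lt P o e by simp
  show ?thesis unfolding good_def using X s by blast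
qed

lemma chain_words:
  assumes stab: "\<forall>r r'. good n M r r' \<longrightarrow> (\<forall>L. good n L r r')"
    and ch: "(w, w') \<in> stp\<^sup>*" and ow: "orb (n + N + M) w"
  shows "x \<in> Aset \<Longrightarrow> tail x n = drop (N + M) w \<Longrightarrow>
      \<exists>y\<in>Aset. tail y n = drop (N + M) w' \<and> (x, y) \<in> (Rn n)\<^sup>*"
  using ch
proof (induction rule: rtrancl_induct)
  case base
  then show ?case by blast
next
  case (step w1 w2)
  obtain y where y: "y \<in> Aset" "tail y n = drop (N + M) w1" "(x, y) \<in> (Rn n)\<^sup>*"
    using step.IH step.prems by blast
  have o1: "orb (n + N + M) w1" using orb_chain[OF step.hyps(1) ow] .
  have o2: "orb (n + N + M) w2" using orb_stp[OF o1 step.hyps(2)] .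
  obtain s where s: "s \<in> S" and c: "(w1 \<in> PA (dm s) \<and> w2 = act s w1) \<or> (w2 \<in> PA (dm s) \<and> w1 = act s w2)"
    using step.hyps(2) unfolding stp_def by blast
  show ?case
  proof (cases "w1 \<in> PA (dm s) \<and> w2 = act s w1")
    case True
    then have "good n M (drop (N + M) w1) (drop (N + M) w2)" using goodstep[OF o1 s] by blast
    then obtain x1 y1 where xy: "x1 \<in> Aset" "y1 \<in> Aset" "ae_equiv rg Gr dm act x1 y1"
      "tail x1 n = drop (N + M) w1" "tail y1 n = drop (N + M) w2"
      using link_A stab by blast
    have "(y, x1) \<in> Rn n" using y xy unfolding Rn_def by simp
    moreover have "(x1, y1) \<in> Rn n" using xy unfolding Rn_def by simp
    ultimately have "(x, y1) \<in> (Rn n)\<^sup>*" using y(3) by (meson rtrancl.rtrancl_into_rtrancl)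
    then show ?thesis using xy by blast
  next
    case False
    then have c2: "w2 \<in> PA (dm s) \<and> w1 = act s w2" using c by blast
    then have "good n M (drop (N + M) w2) (drop (N + M) w1)" using goodstep[OF o2 s] by blast
    then obtain x1 y1 where xy: "x1 \<in> Aset" "y1 \<in> Aset" "ae_equiv rg Gr dm act x1 y1"
      "tail x1 n = drop (N + M) w2" "tail y1 n = drop (N + M) w1"
      using link_A stab by blast
    have "(y, y1) \<in> Rn n" using y xy unfolding Rn_def by simp
    moreover have "(y1, x1) \<in> Rn n" using xy unfolding Rn_def by simp
    ultimately have "(x, x1) \<in> (Rn n)\<^sup>*" using y(3) by (meson rtrancl.rtrancl_into_rtrancl)
    then show ?thesis using xy by blast
  qed
qed

lemma orb_chain_mu: "orb m w \<Longrightarrow> (tail \<mu> m, w) \<in> stp\<^sup>*"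
proof -
  assume "orb m w"
  then obtain g where g: "g \<in> Gr" "dm g = rg (\<mu> m)" "act g (tail \<mu> m) = w" unfolding orb_def by blast
  have "g \<in> gen_groupoid V dm cd mul ginv unit S" using g genS by simp
  moreover have "tail \<mu> m \<in> PA (dm g)" using tail_path[OF mu] g by simp
  ultimately show ?thesis using gen_chain g by metis
qed

lemma chain_A:
  assumes a: "a \<in> Aset" and b: "b \<in> Aset"
  shows "(a, b) \<in> (Rn n)\<^sup>*"
proof -
  obtain M where stab: "\<forall>r r'. good n M r r' \<longrightarrow> (\<forall>L. good n L r r')" using good_stab by blast
  have oa: "orb (n + N + M) (tail a (n + N + M))" and ob: "orb (n + N + M) (tail b (n + N + M))" using a b unfolding Aset_def e_equiv_orb by blast+
  have "(tail \<mu> (n + N + M), tail a (n + N + M)) \<in> stp\<^sup>*" using orb_chain_mu[OF oa] .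
  then have "(tail a (n + N + M), tail \<mu> (n + N + M)) \<in> stp\<^sup>*" by (rule rtrancl_sym) (rule stp_sym)
  moreover have "(tail \<mu> (n + N + M), tail b (n + N + M)) \<in> stp\<^sup>*" using orb_chain_mu[OF ob] .
  ultimately have ch: "(tail a (n + N + M), tail b (n + N + M)) \<in> stp\<^sup>*" by (rule rtrancl_trans)
  have mn: "n + N + M - n = N + M" by simp
  have ta: "tail a n = drop (N + M) (tail a (n + N + M))" using tail_drop[of n "n + N + M" a] mn by simp
  obtain y where y: "y \<in> Aset" "tail y n = drop (N + M) (tail b (n + N + M))" "(a, y) \<in> (Rn n)\<^sup>*"
    using chain_words[OF stab ch oa, OF a ta] by blast
  have "tail y n = tail b n" using y(2) tail_drop[of n "n + N + M" b] mn by simp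
  then have "(y, b) \<in> Rn n" using y b unfolding Rn_def by simp
  then show ?thesis using y(3) by (meson rtrancl.rtrancl_into_rtrancl)
qed

lemma A_closed: "closedin X Aset"
proof -
  have eq: "Aset = \<Inter> (range (\<lambda>k. {x \<in> LIP Ed rg sr. (\<lambda>w. orb k w) (tail x k)}))"
    unfolding Aset_def e_equiv_orb by auto
  show ?thesis unfolding eq by (rule closedin_Inter) (auto intro: tailset_closed)
qed

lemma level_sep:
  assumes cP: "compactin X P" and cQ: "closedin X Q" and PQ: "P \<inter> Q = {}"
  shows "\<exists>n. \<forall>a\<in>P. \<forall>b\<in>Q. tail a n \<noteq> tail b n"
proof -
  have oc: "openin X (topspace X - Q)" using cQ by (simp add: closedin_def)
  have PL: "P \<subseteq> LIP Ed rg sr" using cP compactin_subset_topspace topspace_LIT by metis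
  have QL: "Q \<subseteq> LIP Ed rg sr" using cQ closedin_subset topspace_LIT by metis
  have "\<forall>a\<in>P. \<exists>k. \<forall>y\<in>LIP Ed rg sr. tail y k = tail a k \<longrightarrow> y \<in> topspace X - Q"
  proof
    fix a assume aP: "a \<in> P"
    then have "a \<in> topspace X - Q" using PL PQ topspace_LIT by blast
    then show "\<exists>k. \<forall>y\<in>LIP Ed rg sr. tail y k = tail a k \<longrightarrow> y \<in> topspace X - Q"
      using openin_LIT_nec[OF oc] by blast
  qed
  then have "\<forall>a. \<exists>k. a \<in> P \<longrightarrow> (\<forall>y\<in>LIP Ed rg sr. tail y k = tail a k \<longrightarrow> y \<in> topspace X - Q)" by blast
  then obtain kf where kf0: "\<forall>a. a \<in> P \<longrightarrow> (\<forall>y\<in>LIP Ed rg sr. tail y (kf a) = tail a (kf a) \<longrightarrow> y \<in> topspace X - Q)"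
    by (rule exE[OF choice])
  then have kf: "\<And>a y. a \<in> P \<Longrightarrow> y \<in> LIP Ed rg sr \<Longrightarrow> tail y (kf a) = tail a (kf a) \<Longrightarrow> y \<notin> Q"
    by blast
  define C where "C a = {y \<in> LIP Ed rg sr. (\<lambda>w. w = tail a (kf a)) (tail y (kf a))}" for a
  have oC: "openin X (C a)" for a unfolding C_def by (rule tailset_open)
  have cov: "P \<subseteq> \<Union> (C ` P)" using PL unfolding C_def by auto
  obtain F0 where F0: "finite F0" "F0 \<subseteq> C ` P" "P \<subseteq> \<Union> F0"
    using cP cov oC unfolding compactin_def by (metis (no_types, lifting) imageE)
  obtain P0 where P0: "P0 \<subseteq> P" "finite P0" "F0 = C ` P0"
    using finite_subset_image[OF F0(1,2)] by blast
  define n where "n = Max (insert 0 (kf ` P0))"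
  have kle: "kf a \<le> n" if "a \<in> P0" for a unfolding n_def using P0(2) that by (intro Max_ge) auto
  show ?thesis
  proof (intro exI[of _ n] ballI notI)
    fix a b assume aP: "a \<in> P" and bQ: "b \<in> Q" and t: "tail a n = tail b n"
    obtain a0 where a0: "a0 \<in> P0" "a \<in> C a0" using F0(3) P0(3) aP by blast
    have "tail a (kf a0) = tail a0 (kf a0)" using a0 unfolding C_def by simp
    moreover have "tail b (kf a0) = tail a (kf a0)" using tail_eq_le[OF t[symmetric] kle[OF a0(1)]] .
    ultimately have "b \<notin> Q" using kf[of a0 b] a0(1) P0(1) bQ QL by auto
    then show False using bQ by simp
  qed
qed

lemma conn: "connectedin J (q ` Aset)"
  unfolding connectedin
proof (intro conjI notI)
  have AL: "Aset \<subseteq> LIP Ed rg sr" unfolding Aset_def by auto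
  show "q ` Aset \<subseteq> topspace J" using AL q_surj by blast
  assume "\<exists>E1 E2. openin J E1 \<and> openin J E2 \<and> q ` Aset \<subseteq> E1 \<union> E2 \<and> E1 \<inter> E2 \<inter> q ` Aset = {} \<and>
          E1 \<inter> q ` Aset \<noteq> {} \<and> E2 \<inter> q ` Aset \<noteq> {}"
  then obtain E1 E2 where E: "openin J E1" "openin J E2" "q ` Aset \<subseteq> E1 \<union> E2" "E1 \<inter> E2 \<inter> q ` Aset = {}"
    "E1 \<inter> q ` Aset \<noteq> {}" "E2 \<inter> q ` Aset \<noteq> {}" by blast
  define P where "P = {x \<in> Aset. q x \<in> E1}"
  define Q where "Q = {x \<in> Aset. q x \<in> E2}"
  define O1 where "O1 = {x \<in> topspace X. q x \<in> E1}"
  define O2 where "O2 = {x \<in> topspace X. q x \<in> E2}"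
  have oO1: "openin X O1" unfolding O1_def using openin_continuous_map_preimage[OF q_cont E(1)] .
  have oO2: "openin X O2" unfolding O2_def using openin_continuous_map_preimage[OF q_cont E(2)] .
  have PA2: "P = Aset - O2"
  proof
    show "P \<subseteq> Aset - O2" using E(4) unfolding P_def O2_def by blast
    show "Aset - O2 \<subseteq> P" using E(3) AL unfolding P_def O2_def topspace_LIT by blast
  qed
  have QA1: "Q = Aset - O1"
  proof
    show "Q \<subseteq> Aset - O1" using E(4) unfolding Q_def O1_def by blast
    show "Aset - O1 \<subseteq> Q" using E(3) AL unfolding Q_def O1_def topspace_LIT by blast
  qed
  have cP: "closedin X P" unfolding PA2 using closedin_diff[OF A_closed oO2] .
  have cQ: "closedin X Q" unfolding QA1 using closedin_diff[OF A_closed oO1] .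
  have kP: "compactin X P" using closedin_compact_space[OF compact_LIT[OF finE] cP] .
  have PQ: "P \<inter> Q = {}" using E(4) unfolding P_def Q_def by blast
  obtain n where sep: "\<forall>a\<in>P. \<forall>b\<in>Q. tail a n \<noteq> tail b n" using level_sep[OF kP cQ PQ] by blast
  obtain a where a: "a \<in> P" using E(5) unfolding P_def by blast
  obtain b where b: "b \<in> Q" using E(6) unfolding Q_def by blast
  have ch: "(a, b) \<in> (Rn n)\<^sup>*" using chain_A a b unfolding P_def Q_def by blast
  have "b \<in> P" using ch
  proof (induction rule: rtrancl_induct)
    case base then show ?case using a .
  next
    case (step y z)
    have yP: "y \<in> P" using step.IH .
    have zA: "z \<in> Aset" and yA: "y \<in> Aset" and c: "tail y n = tail z n \<or> ae_equiv rg Gr dm act y z \<or> ae_equiv rg Gr dm act z y"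
      using step.hyps(2) unfolding Rn_def by auto
    have zL: "z \<in> LIP Ed rg sr" and yL: "y \<in> LIP Ed rg sr" using zA yA AL by auto
    show "z \<in> P"
    proof (cases "tail y n = tail z n")
      case True
      have "z \<notin> Q" using sep yP True by blast
      moreover have "z \<in> P \<or> z \<in> Q" using zA E(3) unfolding P_def Q_def by blast
      ultimately show ?thesis by blast
    next
      case False
      then have "q y = q z" using c fibres[OF yL zL] fibres[OF zL yL] by metis
      then show ?thesis using yP zA unfolding P_def by simp
    qed
  qed
  then show False using b PQ by blast
qed

lemma backward:
  assumes nu: "e_equiv rg Gr dm act \<mu> \<nu>" and nuL: "\<nu> \<in> LIP Ed rg sr"
  shows "connected_component_of J (q \<mu>) (q \<nu>)"
proof -
  have "\<mu> \<in> Aset" unfolding Aset_def e_equiv_iff using mu rel_refl[OF mu] by simp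
  moreover have "\<nu> \<in> Aset" unfolding Aset_def using nu nuL by simp
  ultimately show ?thesis unfolding connected_component_of_def using conn by blast
qed

end

theorem proposition6p1:
  fixes V :: "'v set" and Ed :: "'e set" and rg sr :: "'e \<Rightarrow> 'v"
    and Gr :: "'g set" and dm cd :: "'g \<Rightarrow> 'v" and mul :: "'g \<Rightarrow> 'g \<Rightarrow> 'g"
    and ginv :: "'g \<Rightarrow> 'g" and unit :: "'v \<Rightarrow> 'g"
    and act :: "'g \<Rightarrow> 'e list \<Rightarrow> 'e list" and res :: "'g \<Rightarrow> 'e list \<Rightarrow> 'g"
    and J :: "'j topology" and q :: "(nat \<Rightarrow> 'e) \<Rightarrow> 'j"
  assumes finV: "finite V" and finE: "finite Ed"
    and ssa: "self_similar_action V Ed rg sr Gr dm cd mul ginv unit act res"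
    and fg: "finitely_generated V Gr dm cd mul ginv unit"
    and contr: "contracting Ed rg sr Gr dm res"
    and quot: "quotient_map (left_inf_topology Ed rg sr) J q"
    and fibres: "\<And>x y. x \<in> left_inf_paths Ed rg sr \<Longrightarrow> y \<in> left_inf_paths Ed rg sr \<Longrightarrow>
                   q x = q y \<longleftrightarrow> ae_equiv rg Gr dm act x y"
    and mu: "\<mu> \<in> left_inf_paths Ed rg sr" and nu: "\<nu> \<in> left_inf_paths Ed rg sr"
  shows "connected_component_of J (q \<mu>) (q \<nu>) \<longleftrightarrow> e_equiv rg Gr dm act \<mu> \<nu>"
proof -
  obtain S where S: "finite S" "S \<subseteq> Gr" "Gr = gen_groupoid V dm cd mul ginv unit S"
    using fg unfolding finitely_generated_def by blast
  obtain F where F: "finite F" "F \<subseteq> Gr"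
    "\<forall>g\<in>Gr. \<exists>n. \<forall>p\<in>paths_at Ed rg sr (dm g). length p \<ge> n \<longrightarrow> res g p \<in> F"
    using contr unfolding contracting_def by blast
  interpret SSAF V Ed rg sr Gr dm cd mul ginv unit act res J q S F \<mu>
  proof (unfold_locales)
    show "self_similar_action V Ed rg sr Gr dm cd mul ginv unit act res" by (rule ssa)
    show "quotient_map (left_inf_topology Ed rg sr) J q" by (rule quot)
    show "\<And>x y. x \<in> left_inf_paths Ed rg sr \<Longrightarrow> y \<in> left_inf_paths Ed rg sr \<Longrightarrow>
                   q x = q y \<longleftrightarrow> ae_equiv rg Gr dm act x y" by (rule fibres)
    show "finite Ed" by (rule finE)
    show "finite S" "S \<subseteq> Gr" "Gr = gen_groupoid V dm cd mul ginv unit S" using S by auto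
    show "finite F" "F \<subseteq> Gr" "\<forall>g\<in>Gr. \<exists>n. \<forall>p\<in>paths_at Ed rg sr (dm g). length p \<ge> n \<longrightarrow> res g p \<in> F"
      using F by auto
    show "\<mu> \<in> left_inf_paths Ed rg sr" by (rule mu)
  qed
  show ?thesis using forward[OF mu nu] backward[OF _ nu] by blast
qed

end
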